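(* Let $\Pi$ be a set of $n\ge2$ processes and let $\mathcal{G}^1,\mathcal{G}^2,\dots$ be an infinite sequence of simple directed graphs on $\Pi$ such that every $\mathcal{G}^r$, $r>0$, contains at most one root component. Then (i) there is at least one process $p$ such that $d_1(p,q)$ is finite for all $q\in\Pi$, and in fact $d_1(p,q)\le n(n-2)+1$ for all $q\in\Pi$. Conversely, (ii) for $n>2$ there exist sequences of graphs, each containing exactly one root component, such that no process $p$ is causally influenced by all other processes, i.e., there is no $p$ with $d_1(q,p)<\infty$ for all $q\in\Pi$.
   Context: $\mathcal{G}^r$ is the round-$r$ communication graph. A root component of $\mathcal{G}^r$ is a strongly connected component $\mathcal{R}$ of $\mathcal{G}^r$ such that there is no edge $(q\to p)\in\mathcal{G}^r$ with $p\in\mathcal{R}$, $q\notin\mathcal{R}$. Process $p$ causally influences $q$ in round $t$ if $q=p$ or $(p\to q)\in\mathcal{G}^t$. A causal chain of length $k\ge1$ from $p$ in round $t$ to $q$ is a sequence $p=p_0,\dots,p_k=q$ with $p_i$ causally influencing $p_{i+1}$ in round $t+i$ for $0\le i<k$; the causal distance $d_t(p,q)$ is the minimum length of such a chain, and $\infty$ if none exists. *)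

theory Defs
  imports Main "HOL-Library.Extended_Nat" "HOL-Library.Cardinality"
begin

text \<open>Processes are the elements of a finite type 'a (the set \<Pi> = UNIV).
  A directed graph on \<Pi> is an edge relation E :: ('a \<times> 'a) set.\<close>

definition simple_digraph :: "('a \<times> 'a) set \<Rightarrow> bool" where
  "simple_digraph E \<longleftrightarrow> (\<forall>p. (p, p) \<notin> E)"

definition strongly_connected_component :: "('a \<times> 'a) set \<Rightarrow> 'a set \<Rightarrow> bool" where
  "strongly_connected_component E R \<longleftrightarrow>
     R \<noteq> {} \<and>
     (\<forall>p\<in>R. \<forall>q\<in>R. (p, q) \<in> E\<^sup>*) \<and>
     (\<forall>p\<in>R. \<forall>q. (p, q) \<in> E\<^sup>* \<and> (q, p) \<in> E\<^sup>* \<longrightarrow> q \<in> R)"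

definition root_component :: "('a \<times> 'a) set \<Rightarrow> 'a set \<Rightarrow> bool" where
  "root_component E R \<longleftrightarrow>
     strongly_connected_component E R \<and>
     \<not> (\<exists>p q. (q, p) \<in> E \<and> p \<in> R \<and> q \<notin> R)"

definition causally_influences :: "(nat \<Rightarrow> ('a \<times> 'a) set) \<Rightarrow> nat \<Rightarrow> 'a \<Rightarrow> 'a \<Rightarrow> bool" where
  "causally_influences G t p q \<longleftrightarrow> q = p \<or> (p, q) \<in> G t"

definition causal_chain :: "(nat \<Rightarrow> ('a \<times> 'a) set) \<Rightarrow> nat \<Rightarrow> nat \<Rightarrow> 'a \<Rightarrow> 'a \<Rightarrow> bool" where
  "causal_chain G t k p q \<longleftrightarrow> 1 \<le> k \<and>
     (\<exists>ps :: nat \<Rightarrow> 'a. ps 0 = p \<and> ps k = q \<and>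
        (\<forall>i<k. causally_influences G (t + i) (ps i) (ps (Suc i))))"

definition causal_distance :: "(nat \<Rightarrow> ('a \<times> 'a) set) \<Rightarrow> nat \<Rightarrow> 'a \<Rightarrow> 'a \<Rightarrow> enat" where
  "causal_distance G t p q =
     (if \<exists>k. causal_chain G t k p q then enat (LEAST k. causal_chain G t k p q) else \<infinity>)"

end

theory Submission
  imports Defs
begin

lemma root_exists:
  fixes E :: "('a::finite \<times> 'a) set"
  shows "\<exists>R. root_component E R \<and> (\<exists>a\<in>R. (a, q) \<in> E\<^sup>*)"
proof -
  define anc where "anc b = {c. (c, b) \<in> E\<^sup>*}" for b
  obtain a where aS: "(a, q) \<in> E\<^sup>*" and amin: "\<forall>b. (b, q) \<in> E\<^sup>* \<longrightarrow> card (anc a) \<le> card (anc b)"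
    using ex_has_least_nat[of "\<lambda>b. (b, q) \<in> E\<^sup>*" q "\<lambda>b. card (anc b)"] by auto
  define R where "R = {b. (b, a) \<in> E\<^sup>* \<and> (a, b) \<in> E\<^sup>*}"
  have aR: "a \<in> R" unfolding R_def by auto
  have scc: "strongly_connected_component E R"
    unfolding strongly_connected_component_def R_def
    using rtrancl_trans by (auto intro: rtrancl_trans)
  have noin: "\<not> (\<exists>p c. (c, p) \<in> E \<and> p \<in> R \<and> c \<notin> R)"
  proof
    assume "\<exists>p c. (c, p) \<in> E \<and> p \<in> R \<and> c \<notin> R"
    then obtain b c where cb: "(c, b) \<in> E" and bR: "b \<in> R" and cR: "c \<notin> R" by blast
    have ca: "(c, a) \<in> E\<^sup>*" using cb bR unfolding R_def by auto
    have sub: "anc c \<subseteq> anc a" unfolding anc_def using ca by (auto intro: rtrancl_trans)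
    have "(c, q) \<in> E\<^sup>*" using ca aS by (auto intro: rtrancl_trans)
    then have "card (anc a) \<le> card (anc c)" using amin by auto
    then have "anc c = anc a" using sub card_seteq[of "anc a" "anc c"] by auto
    then have "a \<in> anc c" unfolding anc_def by auto
    then have "(a, c) \<in> E\<^sup>*" unfolding anc_def by auto
    then show False using ca cR unfolding R_def by auto
  qed
  show ?thesis using scc noin aR aS unfolding root_component_def by blast
qed

lemma reach_all:
  fixes E :: "('a::finite \<times> 'a) set"
  assumes "\<forall>R1 R2. root_component E R1 \<and> root_component E R2 \<longrightarrow> R1 = R2"
  shows "\<exists>x. \<forall>q. (x, q) \<in> E\<^sup>*"
proof -
  obtain R0 a0 where R0: "root_component E R0" "a0 \<in> R0"
    using root_exists[of E undefined] by blast
  have "(a0, q) \<in> E\<^sup>*" for q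
  proof -
    obtain R a where "root_component E R" "a \<in> R" "(a, q) \<in> E\<^sup>*"
      using root_exists[of E q] by blast
    moreover have "R = R0" using assms R0 calculation by blast
    ultimately have "(a0, a) \<in> E\<^sup>*" using R0
      unfolding root_component_def strongly_connected_component_def by blast
    then show ?thesis using \<open>(a, q) \<in> E\<^sup>*\<close> by (auto intro: rtrancl_trans)
  qed
  then show ?thesis by blast
qed

lemma leave:
  assumes "(x, q) \<in> E\<^sup>*" "x \<in> F" "q \<notin> F"
  shows "\<exists>u v. u \<in> F \<and> v \<notin> F \<and> (u, v) \<in> E"
  using assms
proof (induction rule: rtrancl_induct)
  case base
  then show ?case by simp
next
  case (step y z)
  then show ?case by (cases "y \<in> F") auto
qed

fun FF :: "(nat \<Rightarrow> ('a \<times> 'a) set) \<Rightarrow> 'a \<Rightarrow> nat \<Rightarrow> 'a set" where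
  "FF G p 0 = {p}"
| "FF G p (Suc k) = {v. \<exists>u\<in>FF G p k. causally_influences G (Suc k) u v}"

lemma FF_mono: "FF G p k \<subseteq> FF G p (Suc k)"
  by (auto simp: causally_influences_def)

lemma FF_p: "p \<in> FF G p k"
  by (induction k) (auto simp: causally_influences_def)

lemma FF_chain: "q \<in> FF G p k \<Longrightarrow> \<exists>ps. ps 0 = p \<and> ps k = q \<and>
    (\<forall>i<k. causally_influences G (1 + i) (ps i) (ps (Suc i)))"
proof (induction k arbitrary: q)
  case 0
  then show ?case by auto
next
  case (Suc k)
  then obtain u where u: "u \<in> FF G p k" "causally_influences G (Suc k) u q" by auto
  then obtain ps where ps: "ps 0 = p" "ps k = u"
    "\<forall>i<k. causally_influences G (1 + i) (ps i) (ps (Suc i))" using Suc.IH by blast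
  define ps' where "ps' = ps(Suc k := q)"
  have "\<forall>i<Suc k. causally_influences G (1 + i) (ps' i) (ps' (Suc i))"
  proof (intro allI impI)
    fix i assume "i < Suc k"
    then show "causally_influences G (1 + i) (ps' i) (ps' (Suc i))"
      using ps u unfolding ps'_def by (cases "i = k") auto
  qed
  moreover have "ps' 0 = p" "ps' (Suc k) = q" using ps unfolding ps'_def by auto
  ultimately show ?case by blast
qed

fun cnt :: "(nat \<Rightarrow> 'a) \<Rightarrow> 'a \<Rightarrow> nat \<Rightarrow> nat" where
  "cnt x p 0 = 0"
| "cnt x p (Suc k) = cnt x p k + (if x (Suc k) = p then 1 else 0)"

lemma cnt_sum: "(\<Sum>p\<in>(UNIV::'a::finite set). cnt x p k) = k"
proof (induction k)
  case 0 then show ?case by simp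
next
  case (Suc k)
  have "(\<Sum>p\<in>(UNIV::'a set). cnt x p (Suc k)) =
        (\<Sum>p\<in>UNIV. cnt x p k) + (\<Sum>p\<in>(UNIV::'a set). if x (Suc k) = p then 1 else 0)"
    by (simp add: sum.distrib)
  also have "(\<Sum>p\<in>(UNIV::'a set). if x (Suc k) = p then 1 else 0) = (1::nat)"
    by (simp add: sum.delta)
  finally show ?case using Suc by simp
qed

lemma FF_card:
  fixes G :: "nat \<Rightarrow> ('a::finite \<times> 'a) set"
  assumes "\<forall>r>0. \<forall>q. (x r, q) \<in> (G r)\<^sup>*"
  shows "card (FF G p k) \<ge> min CARD('a) (1 + cnt x p k)"
proof (induction k)
  case 0 then show ?case by simp
next
  case (Suc k)
  show ?case
  proof (cases "x (Suc k) = p")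
    case False
    then show ?thesis using Suc card_mono[OF _ FF_mono[of G p k]] by auto
  next
    case True
    show ?thesis
    proof (cases "FF G p k = UNIV")
      case True
      then have "FF G p (Suc k) = UNIV" using FF_mono[of G p k] by auto
      then show ?thesis by simp
    next
      case False
      then obtain q where q: "q \<notin> FF G p k" by auto
      have "(x (Suc k), q) \<in> (G (Suc k))\<^sup>*" using assms by auto
      then obtain u v where uv: "u \<in> FF G p k" "v \<notin> FF G p k" "(u, v) \<in> G (Suc k)"
        using leave[of "x (Suc k)" q "G (Suc k)" "FF G p k"] q FF_p[of p G k] \<open>x (Suc k) = p\<close> by blast
      then have "v \<in> FF G p (Suc k)" by (auto simp: causally_influences_def)
      then have "FF G p k < FF G p (Suc k)" using uv FF_mono[of G p k] by auto
      then have "card (FF G p k) < card (FF G p (Suc k))" by (simp add: psubset_card_mono)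
      then show ?thesis using Suc \<open>x (Suc k) = p\<close> by auto
    qed
  qed
qed

theorem lemma14:
  assumes "CARD('a) \<ge> 2"
  shows "(\<forall>G :: nat \<Rightarrow> ('a::finite \<times> 'a) set.
            (\<forall>r>0. simple_digraph (G r) \<and>
                   (\<forall>R1 R2. root_component (G r) R1 \<and> root_component (G r) R2 \<longrightarrow> R1 = R2))
            \<longrightarrow> (\<exists>p. \<forall>q. causal_distance G 1 p q < \<infinity> \<and>
                         causal_distance G 1 p q \<le> enat (CARD('a) * (CARD('a) - 2) + 1)))
       \<and> (CARD('a) > 2 \<longrightarrow>
            (\<exists>G :: nat \<Rightarrow> ('a \<times> 'a) set.
               (\<forall>r>0. simple_digraph (G r) \<and> (\<exists>!R. root_component (G r) R)) \<and>
               \<not> (\<exists>p. \<forall>q. causal_distance G 1 q p < \<infinity>)))"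
proof (intro conjI allI impI)
  fix G :: "nat \<Rightarrow> ('a \<times> 'a) set"
  assume hG: "\<forall>r>0. simple_digraph (G r) \<and>
                   (\<forall>R1 R2. root_component (G r) R1 \<and> root_component (G r) R2 \<longrightarrow> R1 = R2)"
  define n where "n = CARD('a)"
  define T where "T = n * (n - 2) + 1"
  define x where "x r = (SOME x. \<forall>q. (x, q) \<in> (G r)\<^sup>*)" for r
  have hx: "\<forall>r>0. \<forall>q. (x r, q) \<in> (G r)\<^sup>*"
  proof (intro allI impI)
    fix r q assume r: "(r::nat) > 0"
    have "\<exists>y. \<forall>q. (y, q) \<in> (G r)\<^sup>*" using reach_all hG r by blast
    from someI_ex[OF this] show "(x r, q) \<in> (G r)\<^sup>*" unfolding x_def by blast
  qed
  have "\<exists>p. cnt x p T \<ge> n - 1"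
  proof (rule ccontr)
    assume "\<not> ?thesis"
    moreover have "n \<ge> 2" using assms unfolding n_def by simp
    ultimately have "\<forall>p. cnt x p T \<le> n - 2"
    proof (intro allI)
      fix p assume a1: "\<nexists>p. n - 1 \<le> cnt x p T" and a2: "2 \<le> n"
      then have "\<not> n - 1 \<le> cnt x p T" by blast
      then show "cnt x p T \<le> n - 2" using a2 by linarith
    qed
    then have "(\<Sum>p\<in>(UNIV::'a set). cnt x p T) \<le> n * (n - 2)"
      using sum_bounded_above[of UNIV "\<lambda>p. cnt x p T" "n - 2"] unfolding n_def by auto
    then show False using cnt_sum[of x T] unfolding T_def by simp
  qed
  then obtain p where p: "cnt x p T \<ge> n - 1" by blast
  have "card (FF G p T) \<ge> n" using FF_card[OF hx, of p T] p assms unfolding n_def by auto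
  then have "card (FF G p T) = n" using card_mono[of UNIV "FF G p T"] unfolding n_def by auto
  then have full: "FF G p T = UNIV" using card_eq_UNIV_imp_eq_UNIV[of "FF G p T"] unfolding n_def by simp
  have T1: "T \<ge> 1" unfolding T_def by simp
  show "\<exists>p. \<forall>q. causal_distance G 1 p q < \<infinity> \<and>
                causal_distance G 1 p q \<le> enat (CARD('a) * (CARD('a) - 2) + 1)"
  proof (intro exI allI)
    fix q
    have "causal_chain G 1 T p q"
      using FF_chain[of q G p T] full T1 unfolding causal_chain_def by auto
    then have "causal_distance G 1 p q = enat (LEAST k. causal_chain G 1 k p q)"
      "(LEAST k. causal_chain G 1 k p q) \<le> T"
      unfolding causal_distance_def by (auto intro: Least_le)
    then show "causal_distance G 1 p q < \<infinity> \<and>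
                causal_distance G 1 p q \<le> enat (CARD('a) * (CARD('a) - 2) + 1)"
      unfolding T_def n_def by auto
  qed
next
  assume card3: "CARD('a) > 2"
  define a :: 'a where "a = undefined"
  define E where "E = {(u, v). u = a \<and> v \<noteq> a}"
  define G :: "nat \<Rightarrow> ('a \<times> 'a) set" where "G = (\<lambda>r. E)"
  have into_a: "(q, a) \<in> E\<^sup>* \<Longrightarrow> q = a" for q
    by (erule rtranclE) (auto simp: E_def)
  have rootA: "root_component E {a}"
  proof -
    have "\<forall>p\<in>{a}. \<forall>q\<in>{a}. (p, q) \<in> E\<^sup>*" by simp
    moreover have "\<forall>p\<in>{a}. \<forall>q. (p, q) \<in> E\<^sup>* \<and> (q, p) \<in> E\<^sup>* \<longrightarrow> q \<in> {a}"
      using into_a by blast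
    moreover have "\<not> (\<exists>p q. (q, p) \<in> E \<and> p \<in> {a} \<and> q \<notin> {a})" by (simp add: E_def)
    ultimately show ?thesis unfolding root_component_def strongly_connected_component_def by blast
  qed
  have uniq: "root_component E R \<Longrightarrow> R = {a}" for R
  proof -
    assume R: "root_component E R"
    then have "R \<noteq> {}" unfolding root_component_def strongly_connected_component_def by blast
    then obtain r where "r \<in> R" by blast
    have aR: "a \<in> R"
    proof (cases "r = a")
      case False
      then have "(a, r) \<in> E" by (auto simp: E_def)
      moreover have "\<not> (\<exists>p q. (q, p) \<in> E \<and> p \<in> R \<and> q \<notin> R)"
        using R unfolding root_component_def by (rule conjunct2)
      ultimately show ?thesis using \<open>r \<in> R\<close> by blast
    next
      case True
      then show ?thesis using \<open>r \<in> R\<close> by simp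
    qed
    have "q \<in> R \<Longrightarrow> q = a" for q
    proof -
      assume "q \<in> R"
      moreover have "\<forall>p\<in>R. \<forall>q\<in>R. (p, q) \<in> E\<^sup>*" using R unfolding root_component_def strongly_connected_component_def by blast
      ultimately have "(q, a) \<in> E\<^sup>*" using aR by blast
      then show "q = a" by (rule into_a)
    qed
    then show ?thesis using aR by blast
  qed
  show "\<exists>G :: nat \<Rightarrow> ('a \<times> 'a) set.
               (\<forall>r>0. simple_digraph (G r) \<and> (\<exists>!R. root_component (G r) R)) \<and>
               \<not> (\<exists>p. \<forall>q. causal_distance G 1 q p < \<infinity>)"
  proof (intro exI conjI allI impI)
    fix r :: nat
    show "simple_digraph (G r)" unfolding simple_digraph_def G_def E_def by auto
    show "\<exists>!R. root_component (G r) R" unfolding G_def using rootA uniq by blast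
  next
    show "\<not> (\<exists>p. \<forall>q. causal_distance G 1 q p < \<infinity>)"
    proof
      assume "\<exists>p. \<forall>q. causal_distance G 1 q p < \<infinity>"
      then obtain p where hp: "\<forall>q. causal_distance G 1 q p < \<infinity>" by blast
      have "card {a, p} \<le> 2" by (simp add: card_insert_le_m1)
      moreover have "card {a, p} \<noteq> CARD('a) \<or> {a, p} \<noteq> UNIV" using card3 calculation by linarith
      ultimately have "{a, p} \<noteq> UNIV" by auto
      then obtain q where q: "q \<noteq> a" "q \<noteq> p" by auto
      have "\<not> causal_chain G 1 k q p" for k
      proof
        assume "causal_chain G 1 k q p"
        then obtain ps where ps: "ps 0 = q" "ps k = p"
          "\<forall>i<k. causally_influences G (1 + i) (ps i) (ps (Suc i))"
          unfolding causal_chain_def by blast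
        have "i \<le> k \<Longrightarrow> ps i = q" for i
        proof (induction i)
          case 0 then show ?case using ps by simp
        next
          case (Suc i)
          then have "causally_influences G (1 + i) (ps i) (ps (Suc i))" "ps i = q" using ps by auto
          then show ?case using q unfolding causally_influences_def G_def E_def by auto
        qed
        then show False using ps q by auto
      qed
      then have "causal_distance G 1 q p = \<infinity>" unfolding causal_distance_def by auto
      then show False using hp[rule_format, of q] by simp
    qed
  qed
qed

end
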